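(* Let $G$ be a connected graph with a vertex $u$ of degree $1$ and a vertex $v$ of maximum degree $\Delta \geq 2$ such that $u$ and $v$ are not adjacent. Then $mp(G+uv) \leq mp(G)$; in particular $G$ is not saturated.
   Context: All graphs are finite and simple. A degree monotone path in a graph $G$ is a path $v_1v_2\ldots v_m$ such that $\deg(v_1)\le \cdots\le \deg(v_m)$ or $\deg(v_1)\ge \cdots\ge \deg(v_m)$ (degrees taken in $G$); its length is its number of vertices. $mp(G)$ denotes the maximum length of a degree monotone path in $G$. $G+uv$ denotes $G$ with the edge $uv$ added. A graph $G$ is saturated if $mp(G+e)>mp(G)$ for every pair $e$ of non-adjacent vertices of $G$. *)

theory Defs
  imports Main
begin

definition graph :: "'a set \<Rightarrow> 'a set set \<Rightarrow> bool" where
  "graph V E \<longleftrightarrow> finite V \<and> (\<forall>e\<in>E. e \<subseteq> V \<and> card e = 2)"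

definition adj :: "'a set set \<Rightarrow> 'a \<Rightarrow> 'a \<Rightarrow> bool" where
  "adj E x y \<longleftrightarrow> {x, y} \<in> E"

definition deg :: "'a set \<Rightarrow> 'a set set \<Rightarrow> 'a \<Rightarrow> nat" where
  "deg V E x = card {y \<in> V. adj E x y}"

definition max_deg :: "'a set \<Rightarrow> 'a set set \<Rightarrow> nat" where
  "max_deg V E = Max (deg V E ` V)"

definition connected_graph :: "'a set \<Rightarrow> 'a set set \<Rightarrow> bool" where
  "connected_graph V E \<longleftrightarrow> V \<noteq> {} \<and>
     (\<forall>x\<in>V. \<forall>y\<in>V. (\<lambda>a b. adj E a b)\<^sup>*\<^sup>* x y)"

definition is_path :: "'a set \<Rightarrow> 'a set set \<Rightarrow> 'a list \<Rightarrow> bool" where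
  "is_path V E xs \<longleftrightarrow> xs \<noteq> [] \<and> distinct xs \<and> set xs \<subseteq> V \<and>
     (\<forall>i. Suc i < length xs \<longrightarrow> adj E (xs ! i) (xs ! Suc i))"

definition dm_path :: "'a set \<Rightarrow> 'a set set \<Rightarrow> 'a list \<Rightarrow> bool" where
  "dm_path V E xs \<longleftrightarrow> is_path V E xs \<and>
     (sorted (map (deg V E) xs) \<or> sorted (rev (map (deg V E) xs)))"

definition mp :: "'a set \<Rightarrow> 'a set set \<Rightarrow> nat" where
  "mp V E = Max {length xs | xs. dm_path V E xs}"

definition add_edge :: "'a set set \<Rightarrow> 'a \<Rightarrow> 'a \<Rightarrow> 'a set set" where
  "add_edge E u v = insert {u, v} E"

definition saturated :: "'a set \<Rightarrow> 'a set set \<Rightarrow> bool" where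
  "saturated V E \<longleftrightarrow>
     (\<forall>x\<in>V. \<forall>y\<in>V. x \<noteq> y \<and> \<not> adj E x y \<longrightarrow> mp V (add_edge E x y) > mp V E)"

end

theory Submission
  imports Defs
begin

lemma adj_sym: "adj E x y = adj E y x"
  by (simp add: adj_def insert_commute)

lemma adj_sym_fun: "(\<lambda>x y. adj E y x) = adj E"
  by (intro ext) (rule adj_sym)

lemma adj_V:
  assumes "graph V E" "adj E x y"
  shows "x \<in> V \<and> y \<in> V \<and> x \<noteq> y"
proof -
  have e: "{x, y} \<in> E" using assms(2) by (simp add: adj_def)
  hence "{x,y} \<subseteq> V" "card {x,y} = 2" using assms(1) by (auto simp: graph_def)
  thus ?thesis by (cases "x = y") auto
qed

lemma deg_ge:
  assumes "graph V E" "S \<subseteq> V" "\<forall>y\<in>S. adj E x y"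
  shows "card S \<le> deg V E x"
proof -
  have "finite V" using assms(1) by (simp add: graph_def)
  hence "finite {y \<in> V. adj E x y}" by simp
  moreover have "S \<subseteq> {y \<in> V. adj E x y}" using assms by auto
  ultimately show ?thesis unfolding deg_def by (rule card_mono)
qed

lemma deg_le_max:
  assumes "graph V E" "x \<in> V"
  shows "deg V E x \<le> max_deg V E"
  using assms unfolding max_deg_def graph_def by (intro Max_ge) auto

lemma is_path_succ:
  "is_path V E xs \<longleftrightarrow> xs \<noteq> [] \<and> distinct xs \<and> set xs \<subseteq> V \<and> successively (adj E) xs"
  by (simp add: is_path_def successively_conv_nth)

lemma conn_exit:
  assumes "connected_graph V E" "a \<in> V" "b \<in> V" "a \<in> S" "b \<notin> S"
  shows "\<exists>x y. x \<in> S \<and> y \<notin> S \<and> adj E x y"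
proof -
  have r: "(adj E)\<^sup>*\<^sup>* a b" using assms(1-3) unfolding connected_graph_def by auto
  have "(adj E)\<^sup>*\<^sup>* a c \<Longrightarrow> c \<notin> S \<Longrightarrow> \<exists>x y. x \<in> S \<and> y \<notin> S \<and> adj E x y" for c
  proof (induction rule: rtranclp_induct)
    case base
    then show ?case using assms(4) by auto
  next
    case (step y z)
    then show ?case by (cases "y \<in> S") auto
  qed
  thus ?thesis using r assms(5) by blast
qed

lemma dm_len:
  assumes "finite V" "dm_path V E xs"
  shows "length xs \<le> card V"
proof -
  have "distinct xs" "set xs \<subseteq> V" using assms(2) by (auto simp: dm_path_def is_path_def)
  thus ?thesis using assms(1) by (metis card_mono distinct_card)
qed

lemma sorted_const: "\<forall>x\<in>set xs. x = (c::nat) \<Longrightarrow> sorted xs"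
  by (induction xs) auto

locale L =
  fixes V :: "'a set" and E :: "'a set set" and u v :: 'a
  assumes G: "graph V E"
    and C: "connected_graph V E"
    and uV: "u \<in> V" and vV: "v \<in> V"
    and du: "deg V E u = 1"
    and dv: "deg V E v = max_deg V E"
    and D2: "max_deg V E \<ge> 2"
    and nuv: "\<not> adj E u v"
begin

lemma uv: "u \<noteq> v" using du dv D2 by auto

lemma finV: "finite V" using G by (simp add: graph_def)

lemma adjE': "adj (add_edge E u v) x y \<longleftrightarrow> adj E x y \<or> (x = u \<and> y = v) \<or> (x = v \<and> y = u)"
  unfolding add_edge_def adj_def by (auto simp: doubleton_eq_iff)

lemma degE'_other: "x \<noteq> u \<Longrightarrow> x \<noteq> v \<Longrightarrow> deg V (add_edge E u v) x = deg V E x"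
  unfolding deg_def using adjE' by metis

lemma degE'_u: "deg V (add_edge E u v) u = 2"
proof -
  have "{y \<in> V. adj (add_edge E u v) u y} = insert v {y \<in> V. adj E u y}"
    using adjE' vV uv by auto
  moreover have "v \<notin> {y \<in> V. adj E u y}" using nuv by auto
  moreover have "finite {y \<in> V. adj E u y}" using finV by simp
  ultimately show ?thesis using du unfolding deg_def by simp
qed

lemma degE'_v: "deg V (add_edge E u v) v = max_deg V E + 1"
proof -
  have "{y \<in> V. adj (add_edge E u v) v y} = insert u {y \<in> V. adj E v y}"
    using adjE' uV uv by auto
  moreover have "u \<notin> {y \<in> V. adj E v y}" using nuv adj_sym by fastforce
  moreover have "finite {y \<in> V. adj E v y}" using finV by simp
  ultimately show ?thesis using dv unfolding deg_def by simp
qed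

lemma degE'_le: "x \<in> V \<Longrightarrow> x \<noteq> v \<Longrightarrow> deg V (add_edge E u v) x \<le> max_deg V E"
  using degE'_u degE'_other deg_le_max[OF G] D2 by (cases "x = u") auto

lemma nbr2:
  assumes "adj E x a" "adj E x b" "a \<noteq> b"
  shows "deg V E x \<ge> 2"
proof -
  have "card {a,b} \<le> deg V E x"
    using assms adj_V[OF G] by (intro deg_ge[OF G]) auto
  thus ?thesis using assms(3) by simp
qed

lemma nbr3:
  assumes "adj E x a" "adj E x b" "adj E x c" "a \<noteq> b" "a \<noteq> c" "b \<noteq> c"
  shows "deg V E x \<ge> 3"
proof -
  have "card {a,b,c} \<le> deg V E x"
    using assms adj_V[OF G] by (intro deg_ge[OF G]) auto
  thus ?thesis using assms(4-6) by simp
qed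

lemma Lpath:
  assumes P: "is_path V E Q" and len: "length Q \<ge> 2" and Q0: "Q!0 = u"
    and vQ: "v \<notin> set Q" and dQ: "\<forall>x\<in>set Q. x \<noteq> u \<longrightarrow> deg V E x \<le> 2"
  shows "\<exists>ys. dm_path V E ys \<and> length Q + 1 \<le> length ys"
proof -
  have dist: "distinct Q" and QV: "set Q \<subseteq> V" and suc: "successively (adj E) Q"
    using P by (auto simp: is_path_succ)
  define k where "k = length Q"
  have adjnth: "\<And>i. Suc i < k \<Longrightarrow> adj E (Q!i) (Q!Suc i)"
    using suc successively_nth k_def by metis
  have ne: "\<And>i j. i < k \<Longrightarrow> j < k \<Longrightarrow> i \<noteq> j \<Longrightarrow> Q!i \<noteq> Q!j"
    using dist k_def nth_eq_iff_index_eq by metis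
  have memQ: "\<And>i. i < k \<Longrightarrow> Q!i \<in> set Q" using k_def by simp
  have interior: "\<And>i. 0 < i \<Longrightarrow> Suc i < k \<Longrightarrow> adj E (Q!i) (Q!(i-1)) \<and> adj E (Q!i) (Q!Suc i)"
  proof -
    fix i assume "0 < i" "Suc i < k"
    moreover have "Suc (i-1) = i" using \<open>0<i\<close> by simp
    moreover have "adj E (Q!(i-1)) (Q!Suc (i-1))" using adjnth[of "i-1"] \<open>0<i\<close> \<open>Suc i < k\<close> by simp
    ultimately have "adj E (Q!(i-1)) (Q!i)" by simp
    hence "adj E (Q!i) (Q!(i-1))" by (subst adj_sym)
    thus "adj E (Q!i) (Q!(i-1)) \<and> adj E (Q!i) (Q!Suc i)"
      using adjnth[of i] \<open>Suc i < k\<close> by simp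
  qed
  have notu: "\<And>i. 0 < i \<Longrightarrow> i < k \<Longrightarrow> Q!i \<noteq> u"
    using ne Q0 by force
  have Qne: "Q \<noteq> []" using len by auto
  have uQ: "u \<in> set Q" using memQ[of 0] Q0 len k_def Qne by simp
  have exit: "\<And>a b. a \<in> set Q \<Longrightarrow> b \<notin> set Q \<Longrightarrow> adj E a b \<Longrightarrow> a = last Q"
  proof -
    fix a b assume a: "a \<in> set Q" and b: "b \<notin> set Q" and ab: "adj E a b"
    obtain i where i: "i < k" "a = Q!i" using a k_def by (metis in_set_conv_nth)
    show "a = last Q"
    proof (cases "i = 0")
      case True
      have "adj E u (Q!1)" using adjnth[of 0] len k_def Q0 by simp
      moreover have "Q!1 \<noteq> b" using b memQ[of 1] len k_def by auto
      ultimately have "deg V E u \<ge> 2" using nbr2[of u "Q!1" b] ab i True Q0 by auto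
      thus ?thesis using du by simp
    next
      case False
      show ?thesis
      proof (cases "Suc i < k")
        case True
        have "deg V E a \<ge> 3"
          using nbr3[of a "Q!(i-1)" "Q!Suc i" b] interior[of i] False True i ab ne[of "i-1" "Suc i"]
            b memQ by force
        moreover have "deg V E a \<le> 2" using dQ a notu[of i] i False by auto
        ultimately show ?thesis by simp
      next
        case False
        hence "i = k - 1" using i by simp
        thus ?thesis using i k_def Qne by (simp add: last_conv_nth)
      qed
    qed
  qed
  obtain a b where ab: "a \<in> set Q" "b \<notin> set Q" "adj E a b"
    using conn_exit[OF C uV vV, of "set Q"] vQ uQ by blast
  define z where "z = last Q"
  define p where "p = Q!(k-2)"
  have az: "a = z" using exit ab z_def by blast
  have zk: "z = Q!(k-1)" using z_def k_def Qne by (simp add: last_conv_nth)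
  have sk: "Suc (k-2) = k-1" "Suc (k-2) < k" using len k_def by auto
  have "adj E p z" using adjnth[of "k-2"] sk zk p_def by simp
  hence pz: "adj E z p" using adj_sym by metis
  have pQ: "p \<in> set Q" using memQ p_def len k_def by simp
  have zQ: "z \<in> set Q" using memQ zk len k_def by simp
  have zu: "z \<noteq> u" using notu zk len k_def by simp
  have dz: "deg V E z = 2"
    using nbr2[of z p b] pz ab az pQ dQ zQ zu by force
  have deg2: "\<forall>x\<in>set Q. x \<noteq> u \<longrightarrow> deg V E x = 2"
  proof (intro ballI impI)
    fix x assume x: "x \<in> set Q" "x \<noteq> u"
    obtain i where i: "i < k" "x = Q!i" using x k_def by (metis in_set_conv_nth)
    have i0: "0 < i" using i x Q0 by (cases i) auto
    show "deg V E x = 2"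
    proof (cases "Suc i < k")
      case True
      have "deg V E x \<ge> 2" using nbr2[of x "Q!(i-1)" "Q!Suc i"] interior[OF i0 True] ne[of "i-1" "Suc i"] i True
        by simp
      thus ?thesis using dQ x by force
    next
      case False
      hence "i = k - 1" using i by simp
      hence "x = z" using i zk by simp
      thus ?thesis using dz by simp
    qed
  qed
  have bV: "b \<in> V" using adj_V[OF G ab(3)] by simp
  have db1: "deg V E b \<ge> 1"
    using deg_ge[OF G, of "{z}" b] adj_V[OF G ab(3)] ab(3) az adj_sym[of E b z] by auto
  have Qc: "Q = u # tl Q" using Q0 len by (cases Q) auto
  show ?thesis
  proof (cases "deg V E b \<ge> 2")
    case True
    have "dm_path V E (Q @ [b])"
      unfolding dm_path_def
    proof
      show "is_path V E (Q @ [b])"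
        unfolding is_path_succ using dist QV bV ab suc az z_def
        by (auto simp: successively_append_iff)
      have tl2: "\<forall>y\<in>set (map (deg V E) (tl Q)). y = 2"
      proof
        fix y assume "y \<in> set (map (deg V E) (tl Q))"
        then obtain x where x: "x \<in> set (tl Q)" "y = deg V E x" by auto
        have "x \<noteq> u" using x dist Qc by (metis distinct.simps(2))
        moreover have "x \<in> set Q" using x Qc by (metis list.set_intros(2))
        ultimately show "y = 2" using deg2 x by simp
      qed
      have "map (deg V E) (Q @ [b]) = 1 # (map (deg V E) (tl Q) @ [deg V E b])"
      proof -
        have e: "Q @ [b] = u # (tl Q @ [b])" using Qc by (metis append_Cons)
        show ?thesis unfolding e using du by simp
      qed
      moreover have "sorted (1 # (map (deg V E) (tl Q) @ [deg V E b]))"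
        using tl2 True sorted_const[OF tl2] by (auto simp: sorted_append)
      ultimately show "sorted (map (deg V E) (Q @ [b])) \<or> sorted (rev (map (deg V E) (Q @ [b])))"
        by simp
    qed
    thus ?thesis by (intro exI[of _ "Q @ [b]"]) simp
  next
    case False
    hence db: "deg V E b = 1" using db1 by simp
    have "v \<notin> insert b (set Q)" using vQ db dv D2 by auto
    then obtain a' b' where ab': "a' \<in> insert b (set Q)" "b' \<notin> insert b (set Q)" "adj E a' b'"
      using conn_exit[OF C uV vV, of "insert b (set Q)"] uQ by blast
    show ?thesis
    proof (cases "a' = b")
      case True
      have "deg V E b \<ge> 2" using nbr2[of b z b'] ab' True ab az adj_sym zQ by fastforce
      thus ?thesis using db by simp
    next
      case False
      hence "a' = z" using exit ab' z_def by auto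
      hence "deg V E z \<ge> 3" using nbr3[of z p b b'] ab' ab az pz pQ by (metis insertCI)
      thus ?thesis using dz by simp
    qed
  qed
qed


lemma Msorted:
  assumes P: "is_path V (add_edge E u v) P" and S: "sorted (map (deg V (add_edge E u v)) P)"
  shows "\<exists>ys. dm_path V E ys \<and> length P \<le> length ys"
proof -
  define D where "D = deg V (add_edge E u v)"
  define m where "m = length P"
  have dist: "distinct P" and PV: "set P \<subseteq> V" and suc: "successively (adj (add_edge E u v)) P"
    and Pne: "P \<noteq> []"
    using P by (auto simp: is_path_succ)
  have adjnth: "\<And>i. Suc i < m \<Longrightarrow> adj (add_edge E u v) (P!i) (P!Suc i)"
    using suc successively_nth m_def by metis
  have mono: "\<And>i j. i \<le> j \<Longrightarrow> j < m \<Longrightarrow> D (P!i) \<le> D (P!j)"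
    using S unfolding sorted_iff_nth_mono m_def D_def by simp
  have ne: "\<And>i j. i < m \<Longrightarrow> j < m \<Longrightarrow> i \<noteq> j \<Longrightarrow> P!i \<noteq> P!j"
    using dist m_def nth_eq_iff_index_eq by metis
  have inV: "\<And>i. i < m \<Longrightarrow> P!i \<in> V" using PV m_def by auto
  have vpos: "\<And>i. i < m \<Longrightarrow> P!i = v \<Longrightarrow> i = m - 1"
  proof (rule ccontr)
    fix i assume i: "i < m" "P!i = v" "i \<noteq> m - 1"
    hence si: "Suc i < m" by simp
    have "P!Suc i \<noteq> v" using ne[of i "Suc i"] si i by simp
    hence "D (P!Suc i) \<le> max_deg V E" using degE'_le inV si D_def by simp
    moreover have "D (P!i) \<le> D (P!Suc i)" using mono si by simp
    ultimately show False using i degE'_v D_def by simp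
  qed
  have Dv: "D v = max_deg V E + 1" using degE'_v D_def by simp
  have Du: "D u = 2" using degE'_u D_def by simp
  have Do: "\<And>x. x \<noteq> u \<Longrightarrow> x \<noteq> v \<Longrightarrow> D x = deg V E x" using degE'_other D_def by simp
  consider (A) "u \<notin> set P \<or> (P!0 = u \<and> (m < 2 \<or> P!1 \<noteq> v))"
    | (B) "P!0 = u" "m \<ge> 2" "P!1 = v"
    | (C) "u \<in> set P" "P!0 \<noteq> u"
    by fastforce
  then show ?thesis
  proof cases
    case A
    have uidx: "\<And>i. i < m \<Longrightarrow> P!i = u \<Longrightarrow> i = 0 \<and> P!0 = u"
    proof -
      fix i assume i: "i < m" "P!i = u"
      hence "u \<in> set P" using m_def by auto
      hence P0: "P!0 = u" using A by simp
      show "i = 0 \<and> P!0 = u" using ne[of i 0] i P0 by force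
    qed
    have "successively (adj E) P"
      unfolding successively_conv_nth
    proof (intro allI impI)
      fix i assume si: "Suc i < length P"
      hence si': "Suc i < m" using m_def by simp
      have "adj (add_edge E u v) (P!i) (P!Suc i)" using adjnth si' by simp
      moreover have "\<not> (P!i = u \<and> P!Suc i = v)"
      proof
        assume h: "P!i = u \<and> P!Suc i = v"
        hence "i = 0 \<and> P!0 = u" using uidx[of i] si' by simp
        hence "P!0 = u" "m \<ge> 2" "P!1 = v" using h si' by auto
        moreover have "u \<in> set P" using h si' m_def by (metis Suc_lessD nth_mem)
        ultimately show False using A by simp
      qed
      moreover have "\<not> (P!i = v \<and> P!Suc i = u)" using uidx[of "Suc i"] si' by auto
      ultimately show "adj E (P!i) (P!Suc i)" using adjE' by blast
    qed
    moreover have "sorted (map (deg V E) P)"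
      unfolding sorted_iff_nth_mono_less
    proof (intro allI impI)
      fix i j assume ij: "i < j" "j < length (map (deg V E) P)"
      hence j: "j < m" and i: "i < m" using m_def by auto
      show "map (deg V E) P ! i \<le> map (deg V E) P ! j"
      proof (cases "P!j = v")
        case True
        thus ?thesis using deg_le_max[OF G inV[OF i]] dv i j m_def by simp
      next
        case False
        have ju: "P!j \<noteq> u" using uidx[OF j] ij by auto
        have iv: "P!i \<noteq> v" using vpos[OF i] ij j by auto
        have "D (P!i) \<le> D (P!j)" using mono ij j by simp
        moreover have "D (P!j) = deg V E (P!j)" using Do ju False by simp
        ultimately show ?thesis using i j Do[of "P!i"] iv Du du m_def by (cases "P!i = u") auto
      qed
    qed
    ultimately have "dm_path V E P" using dist PV Pne by (simp add: dm_path_def is_path_succ)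
    thus ?thesis by blast
  next
    case B
    have m2: "m = 2" using vpos[of 1] B by simp
    have "card {y \<in> V. adj E u y} = 1" using du by (simp add: deg_def)
    then obtain w where w: "{y \<in> V. adj E u y} = {w}" by (rule card_1_singletonE)
    hence aw: "adj E u w" by auto
    have wV: "w \<in> V" and uw: "u \<noteq> w" using adj_V[OF G aw] by auto
    have "card {u} \<le> deg V E w" using deg_ge[OF G, of "{u}" w] uV aw adj_sym[of E w u] by auto
    hence "deg V E w \<ge> 1" by simp
    hence "dm_path V E [u, w]" using aw uw wV uV du by (simp add: dm_path_def is_path_succ)
    thus ?thesis using m2 m_def by (intro exI[of _ "[u,w]"]) simp
  next
    case C
    obtain j where j: "j < m" "P!j = u" using C m_def by (metis in_set_conv_nth)
    have j0: "j \<noteq> 0" using j C by (cases j) auto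
    have lenb: "m \<le> j + 2"
    proof (rule ccontr)
      assume "\<not> m \<le> j + 2"
      hence ss: "Suc (Suc j) < m" by simp
      have e: "Suc (j - 1) = j" using j0 by simp
      have a1: "adj (add_edge E u v) (P!(j-1)) u" using adjnth[of "j-1"] e j ss by simp
      have a2: "adj (add_edge E u v) u (P!Suc j)" using adjnth[of j] j ss by simp
      have x1: "P!(j-1) \<noteq> v" using vpos[of "j-1"] j ss by fastforce
      have x2: "P!Suc j \<noteq> v" using vpos[of "Suc j"] ss by auto
      have b1: "adj E u (P!(j-1))" using a1 x1 uv adjE' adj_sym[of E "P!(j-1)" u] by blast
      have b2: "adj E u (P!Suc j)" using a2 x2 uv adjE' by blast
      have "P!(j-1) \<noteq> P!Suc j" using ne[of "j-1" "Suc j"] ss j by simp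
      hence "deg V E u \<ge> 2" using nbr2 b1 b2 by blast
      thus False using du by simp
    qed
    define T where "T = take (Suc j) P"
    define Q where "Q = rev T"
    have lT: "length T = Suc j" using T_def j m_def by simp
    have Tnth: "\<And>i. i < Suc j \<Longrightarrow> T!i = P!i" using T_def by simp
    have memT: "\<And>x. x \<in> set T \<Longrightarrow> \<exists>i. i \<le> j \<and> x = P!i"
      using lT Tnth by (metis in_set_conv_nth less_Suc_eq_le)
    have vT: "v \<notin> set T"
    proof
      assume "v \<in> set T"
      then obtain i where i: "i \<le> j" "v = P!i" using memT by blast
      hence "i = m - 1" using vpos[of i] j by simp
      hence "i = j" using i j by simp
      thus False using i j uv by simp
    qed
    have sT: "successively (adj E) T"
      unfolding successively_conv_nth
    proof (intro allI impI)
      fix i assume si: "Suc i < length T"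
      hence "adj (add_edge E u v) (T!i) (T!Suc i)" using adjnth[of i] Tnth lT j by simp
      moreover have "T!i \<noteq> v" "T!Suc i \<noteq> v" using vT si by (auto intro: nth_mem)
      ultimately show "adj E (T!i) (T!Suc i)" using adjE' by blast
    qed
    have isQ: "is_path V E Q"
      unfolding is_path_succ Q_def
    proof (intro conjI)
      show "rev T \<noteq> []" using lT by auto
      show "distinct (rev T)" using dist T_def by simp
      show "set (rev T) \<subseteq> V" using PV T_def set_take_subset by fastforce
      have "successively (\<lambda>x y. adj E y x) T" by (subst adj_sym_fun) (rule sT)
      thus "successively (adj E) (rev T)" by simp
    qed
    have lQ: "length Q \<ge> 2" using lT j0 Q_def by simp
    have Q0: "Q!0 = u" using Q_def lT Tnth j by (simp add: rev_nth)
    have vQ: "v \<notin> set Q" using vT Q_def by simp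
    have dQ: "\<forall>x\<in>set Q. x \<noteq> u \<longrightarrow> deg V E x \<le> 2"
    proof (intro ballI impI)
      fix x assume x: "x \<in> set Q" "x \<noteq> u"
      then obtain i where i: "i \<le> j" "x = P!i" using memT Q_def by auto
      hence "i < j" using x j by (cases "i = j") auto
      hence "D x \<le> D u" using mono[of i j] i j by simp
      moreover have "x \<noteq> v" using x vQ by auto
      ultimately show "deg V E x \<le> 2" using Do x Du by simp
    qed
    obtain ys where "dm_path V E ys" "length Q + 1 \<le> length ys"
      using Lpath[OF isQ lQ Q0 vQ dQ] by blast
    moreover have "length Q = Suc j" using Q_def lT by simp
    ultimately show ?thesis using lenb m_def by (intro exI[of _ ys]) simp
  qed
qed

lemma Mall:
  assumes "dm_path V (add_edge E u v) P"
  shows "\<exists>ys. dm_path V E ys \<and> length P \<le> length ys"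
proof -
  have P: "is_path V (add_edge E u v) P" using assms by (simp add: dm_path_def)
  show ?thesis
  proof (cases "sorted (map (deg V (add_edge E u v)) P)")
    case True
    thus ?thesis using Msorted P by blast
  next
    case False
    hence s: "sorted (map (deg V (add_edge E u v)) (rev P))"
      using assms by (simp add: dm_path_def rev_map)
    have "successively (\<lambda>x y. adj (add_edge E u v) y x) P"
      by (subst adj_sym_fun) (use P in \<open>simp add: is_path_succ\<close>)
    hence "is_path V (add_edge E u v) (rev P)"
      using P by (simp add: is_path_succ)
    thus ?thesis using Msorted s by fastforce
  qed
qed

lemma mp_fin: "finite V \<Longrightarrow> finite {length xs | xs. dm_path V F xs}"
  by (rule finite_subset[of _ "{..card V}"]) (auto dest: dm_len)

lemma main: "mp V (add_edge E u v) \<le> mp V E"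
proof -
  have s1: "dm_path V F [u]" for F using uV by (simp add: dm_path_def is_path_def)
  have "mp V (add_edge E u v) \<in> {length xs | xs. dm_path V (add_edge E u v) xs}"
    unfolding mp_def using mp_fin[OF finV] s1 by (intro Max_in) auto
  then obtain P where P: "dm_path V (add_edge E u v) P" "length P = mp V (add_edge E u v)" by auto
  obtain ys where ys: "dm_path V E ys" "length P \<le> length ys" using Mall[OF P(1)] by blast
  have "length ys \<le> mp V E" unfolding mp_def using mp_fin[OF finV] ys by (intro Max_ge) auto
  thus ?thesis using P ys by simp
qed

lemma notsat: "\<not> saturated V E"
  using main uV vV uv nuv unfolding saturated_def by fastforce

end

theorem lemma2p2:
  fixes V :: "'a set" and E :: "'a set set" and u v :: 'a
  assumes "graph V E"
    and "connected_graph V E"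
    and "u \<in> V" and "v \<in> V"
    and "deg V E u = 1"
    and "deg V E v = max_deg V E"
    and "max_deg V E \<ge> 2"
    and "\<not> adj E u v"
  shows "mp V (add_edge E u v) \<le> mp V E \<and> \<not> saturated V E"
proof -
  interpret L V E u v using assms by unfold_locales
  show ?thesis using main notsat by simp
qed

end
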